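(* Let $D\subseteq\mathbb{C}$ be a domain and let $f$, $g$, $\alpha$ be meromorphic functions on $D$ such that $\alpha$ is not identically $0$ and not identically $\infty$. Suppose that on $D$ the functions $f$ and $g$ share the function $\alpha$ CM in the sense of value. Then $\frac{f}{\alpha}$ and $\frac{g}{\alpha}$ share the value $1$ CM on $D$, i.e. for every $z_0\in D$ and every $m\ge 1$, $\frac{f}{\alpha}-1$ has a zero of order $m$ at $z_0$ if and only if $\frac{g}{\alpha}-1$ has a zero of order $m$ at $z_0$.
   Context: Sharing CM in the sense of value: $f$ and $g$ share $\alpha$ CM in the sense of value on $D$ if for every $z_0\in D$: (i) if $\alpha(z_0)\neq\infty$, then for every $m\ge1$, $f-\alpha$ has a zero of order $m$ at $z_0$ if and only if $g-\alpha$ has a zero of order $m$ at $z_0$; (ii) if $\alpha(z_0)=\infty$, then for every $m\ge1$, $\frac{1}{f}-\frac{1}{\alpha}$ has a zero of order $m$ at $z_0$ if and only if $\frac{1}{g}-\frac{1}{\alpha}$ has a zero of order $m$ at $z_0$. *)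

theory Defs
  imports "HOL-Complex_Analysis.Complex_Analysis"
begin

text \<open>A meromorphic function is represented by a function complex \<Rightarrow> complex
  satisfying meromorphic_on; its value at a pole is a junk value, and the point
  z is a pole (value infinity) iff is_pole h z.  "h has a zero of order m at z"
  (m \<ge> 1) is expressed via the order zorder, which only depends on h on a punctured
  neighbourhood of z; we require h not to vanish identically near z.\<close>

definition zero_of_order :: "(complex \<Rightarrow> complex) \<Rightarrow> complex \<Rightarrow> nat \<Rightarrow> bool" where
  "zero_of_order h z m \<longleftrightarrow> (\<exists>\<^sub>F w in at z. h w \<noteq> 0) \<and> zorder h z = int m"

text \<open>If f vanished identically near z,
  1/f would be identically infinity (no zero); HOL's inverse 0 = 0 convention is
  excluded by requiring f not to vanish identically near z.\<close>

definition recip_diff_zero_of_order ::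
  "(complex \<Rightarrow> complex) \<Rightarrow> (complex \<Rightarrow> complex) \<Rightarrow> complex \<Rightarrow> nat \<Rightarrow> bool" where
  "recip_diff_zero_of_order f \<alpha> z m \<longleftrightarrow>
     (\<exists>\<^sub>F w in at z. f w \<noteq> 0) \<and> zero_of_order (\<lambda>w. inverse (f w) - inverse (\<alpha> w)) z m"

definition share_CM_value ::
  "(complex \<Rightarrow> complex) \<Rightarrow> (complex \<Rightarrow> complex) \<Rightarrow> (complex \<Rightarrow> complex) \<Rightarrow> complex set \<Rightarrow> bool" where
  "share_CM_value f g \<alpha> D \<longleftrightarrow>
     (\<forall>z\<in>D. \<forall>m::nat. m \<ge> 1 \<longrightarrow>
        (\<not> is_pole \<alpha> z \<longrightarrow>
           (zero_of_order (\<lambda>w. f w - \<alpha> w) z m \<longleftrightarrow> zero_of_order (\<lambda>w. g w - \<alpha> w) z m)) \<and>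
        (is_pole \<alpha> z \<longrightarrow>
           (recip_diff_zero_of_order f \<alpha> z m \<longleftrightarrow> recip_diff_zero_of_order g \<alpha> z m)))"

end

theory Submission
  imports Defs
begin

lemma mero_freq_ev:
  fixes h :: "complex \<Rightarrow> complex"
  assumes "h meromorphic_on {z}" "\<exists>\<^sub>F w in at z. h w \<noteq> 0"
  shows "\<forall>\<^sub>F w in at z. h w \<noteq> 0"
proof (rule ccontr)
  assume "\<not> (\<forall>\<^sub>F w in at z. h w \<noteq> 0)"
  hence "\<exists>\<^sub>F w in at z. h w = 0" by (simp add: not_eventually)
  hence "\<forall>\<^sub>F w in at z. h w = 0"
    using assms(1) not_essential_frequently_0_imp_eventually_0 meromorphic_at_iff by blast
  thus False using assms(2) by (simp add: frequently_def)
qed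

lemma zoo_cong:
  assumes "\<forall>\<^sub>F w in at z. h1 w = h2 w"
  shows "zero_of_order h1 z m \<longleftrightarrow> zero_of_order h2 z m"
proof -
  have "(\<exists>\<^sub>F w in at z. h1 w \<noteq> 0) \<longleftrightarrow> (\<exists>\<^sub>F w in at z. h2 w \<noteq> 0)"
    by (rule frequently_cong[OF assms]) simp
  moreover have "zorder h1 z = zorder h2 z" by (rule zorder_cong[OF assms refl])
  ultimately show ?thesis unfolding zero_of_order_def by simp
qed

lemma key_div:
  fixes f \<alpha> :: "complex \<Rightarrow> complex"
  assumes fm: "f meromorphic_on {z}" and am: "\<alpha> meromorphic_on {z}"
    and an: "\<forall>\<^sub>F w in at z. \<alpha> w \<noteq> 0"
  shows "zero_of_order (\<lambda>w. f w / \<alpha> w - 1) z m \<longleftrightarrow>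
     ((\<exists>\<^sub>F w in at z. f w - \<alpha> w \<noteq> 0) \<and> zorder (\<lambda>w. f w - \<alpha> w) z - zorder \<alpha> z = int m)"
proof -
  have "zero_of_order (\<lambda>w. f w / \<alpha> w - 1) z m \<longleftrightarrow> zero_of_order (\<lambda>w. (f w - \<alpha> w) / \<alpha> w) z m"
    by (rule zoo_cong, rule eventually_mono[OF an]) (simp add: field_simps)
  also have "\<dots> \<longleftrightarrow> ((\<exists>\<^sub>F w in at z. f w - \<alpha> w \<noteq> 0) \<and> zorder (\<lambda>w. f w - \<alpha> w) z - zorder \<alpha> z = int m)"
  proof (cases "\<exists>\<^sub>F w in at z. f w - \<alpha> w \<noteq> 0")
    case True
    have Fm: "(\<lambda>w. f w - \<alpha> w) meromorphic_on {z}" by (intro meromorphic_intros fm am)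
    have "zorder (\<lambda>w. (f w - \<alpha> w) / \<alpha> w) z = zorder (\<lambda>w. f w - \<alpha> w) z - zorder \<alpha> z"
      by (rule zorder_divide[OF Fm True am]) (simp add: an eventually_frequently)
    moreover have "\<exists>\<^sub>F w in at z. (f w - \<alpha> w) / \<alpha> w \<noteq> 0"
      by (rule frequently_cong[OF an, THEN iffD1, OF _ True]) simp
    ultimately show ?thesis using True unfolding zero_of_order_def by simp
  next
    case False
    hence "\<not> (\<exists>\<^sub>F w in at z. (f w - \<alpha> w) / \<alpha> w \<noteq> 0)"
      using frequently_cong[OF an, of "\<lambda>w. (f w - \<alpha> w) / \<alpha> w \<noteq> 0" "\<lambda>w. f w - \<alpha> w \<noteq> 0"] by simp
    thus ?thesis using False unfolding zero_of_order_def by simp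
  qed
  finally show ?thesis .
qed


lemma key_nonpole:
  fixes f \<alpha> :: "complex \<Rightarrow> complex"
  assumes fm: "f meromorphic_on {z}" and am: "\<alpha> meromorphic_on {z}"
    and an: "\<forall>\<^sub>F w in at z. \<alpha> w \<noteq> 0" and np: "\<not> is_pole \<alpha> z"
  shows "zero_of_order (\<lambda>w. f w / \<alpha> w - 1) z m \<longleftrightarrow>
     zero_of_order (\<lambda>w. f w - \<alpha> w) z (nat (int m + zorder \<alpha> z))"
proof -
  have c: "zorder \<alpha> z \<ge> 0"
    using zorder_neg_imp_is_pole[OF am an] np by linarith
  show ?thesis unfolding key_div[OF fm am an] unfolding zero_of_order_def
    using c by auto
qed

lemma key_pole:
  fixes f \<alpha> :: "complex \<Rightarrow> complex"
  assumes fm: "f meromorphic_on {z}" and am: "\<alpha> meromorphic_on {z}"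
    and an: "\<forall>\<^sub>F w in at z. \<alpha> w \<noteq> 0" and pl: "is_pole \<alpha> z" and m1: "m \<ge> 1"
  shows "zero_of_order (\<lambda>w. f w / \<alpha> w - 1) z m \<longleftrightarrow>
     recip_diff_zero_of_order f \<alpha> z (nat (int m - zorder \<alpha> z))"
proof -
  define c where "c = zorder \<alpha> z"
  define F where "F = (\<lambda>w. f w - \<alpha> w)"
  define R where "R = (\<lambda>w. inverse (f w) - inverse (\<alpha> w))"
  have c: "c < 0" unfolding c_def
    using isolated_pole_imp_neg_zorder pl am meromorphic_at_iff by blast
  have Fm: "F meromorphic_on {z}" unfolding F_def by (intro meromorphic_intros fm am)
  have aF: "\<exists>\<^sub>F w in at z. \<alpha> w \<noteq> 0" by (simp add: an eventually_frequently)
  have common: "zorder R z = zorder F z - zorder f z - c \<and> (\<exists>\<^sub>F w in at z. R w \<noteq> 0)"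
    if ff: "\<exists>\<^sub>F w in at z. f w \<noteq> 0" and Ff: "\<exists>\<^sub>F w in at z. F w \<noteq> 0"
  proof
    have fe: "\<forall>\<^sub>F w in at z. f w \<noteq> 0" by (rule mero_freq_ev[OF fm ff])
    have Fe: "\<forall>\<^sub>F w in at z. F w \<noteq> 0" by (rule mero_freq_ev[OF Fm Ff])
    have ev: "\<forall>\<^sub>F w in at z. R w = (- F w) / (f w * \<alpha> w)"
      using fe an by eventually_elim (simp add: R_def F_def field_simps)
    have pe: "\<forall>\<^sub>F w in at z. f w * \<alpha> w \<noteq> 0"
      using fe an by eventually_elim simp
    have "zorder R z = zorder (\<lambda>w. (- F w) / (f w * \<alpha> w)) z"
      by (rule zorder_cong[OF ev refl])
    also have "\<dots> = zorder (\<lambda>w. - F w) z - zorder (\<lambda>w. f w * \<alpha> w) z"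
      by (rule zorder_divide) (use Ff pe in \<open>auto intro!: meromorphic_intros Fm fm am simp: eventually_frequently\<close>)
    also have "zorder (\<lambda>w. f w * \<alpha> w) z = zorder f z + c"
      unfolding c_def by (rule zorder_mult[OF fm ff am aF])
    finally show "zorder R z = zorder F z - zorder f z - c" by simp
    have "\<forall>\<^sub>F w in at z. R w \<noteq> 0"
      using ev fe an Fe by eventually_elim simp
    thus "\<exists>\<^sub>F w in at z. R w \<noteq> 0" by (simp add: eventually_frequently)
  qed
  show ?thesis
  proof
    assume "zero_of_order (\<lambda>w. f w / \<alpha> w - 1) z m"
    hence Ff: "\<exists>\<^sub>F w in at z. F w \<noteq> 0" and a: "zorder F z - c = int m"
      unfolding key_div[OF fm am an] F_def c_def by auto
    have ff: "\<exists>\<^sub>F w in at z. f w \<noteq> 0"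
    proof (rule ccontr)
      assume "\<not> ?thesis"
      hence "\<forall>\<^sub>F w in at z. F w = - \<alpha> w" unfolding F_def not_frequently
        by (rule eventually_mono) simp
      hence "zorder F z = zorder (\<lambda>w. - \<alpha> w) z" by (rule zorder_cong[OF _ refl])
      hence "zorder F z = c" unfolding c_def by simp
      thus False using a m1 by simp
    qed
    have "zorder (\<lambda>w. F w + \<alpha> w) z = zorder \<alpha> z"
      by (rule zorder_add2[OF Fm Ff am aF]) (use a m1 in \<open>simp add: c_def\<close>)
    hence p: "zorder f z = c" unfolding F_def c_def by simp
    from common[OF ff Ff] p a show "recip_diff_zero_of_order f \<alpha> z (nat (int m - zorder \<alpha> z))"
      unfolding recip_diff_zero_of_order_def zero_of_order_def R_def[symmetric] c_def[symmetric]
      using ff c by simp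
  next
    assume "recip_diff_zero_of_order f \<alpha> z (nat (int m - zorder \<alpha> z))"
    hence ff: "\<exists>\<^sub>F w in at z. f w \<noteq> 0" and Rf: "\<exists>\<^sub>F w in at z. R w \<noteq> 0"
      and r: "zorder R z = int m - c"
      unfolding recip_diff_zero_of_order_def zero_of_order_def R_def[symmetric] c_def[symmetric]
      using c by auto
    have Ff: "\<exists>\<^sub>F w in at z. F w \<noteq> 0"
    proof (rule ccontr)
      assume "\<not> ?thesis"
      hence "\<forall>\<^sub>F w in at z. F w = 0" unfolding not_frequently by simp
      hence "\<forall>\<^sub>F w in at z. R w = 0"
        using mero_freq_ev[OF fm ff] an
        by eventually_elim (simp add: R_def F_def)
      thus False using Rf by (simp add: frequently_def)
    qed
    have e: "zorder R z = zorder F z - zorder f z - c" using common[OF ff Ff] by simp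
    have p: "zorder f z = c"
    proof (rule ccontr)
      assume ne: "zorder f z \<noteq> c"
      show False
      proof (cases "zorder f z < c")
        case True
        have "zorder F z = zorder f z" unfolding F_def
          by (rule zorder_diff1[OF fm ff am aF]) (use True in \<open>simp add: c_def\<close>)
        thus False using e r m1 by simp
      next
        case False
        hence "zorder f z > c" using ne by simp
        hence "zorder F z = c" unfolding F_def c_def
          by (intro zorder_diff2[OF fm ff am aF]) (simp add: c_def)
        thus False using e r m1 \<open>zorder f z > c\<close> by simp
      qed
    qed
    show "zero_of_order (\<lambda>w. f w / \<alpha> w - 1) z m"
      unfolding key_div[OF fm am an] using Ff e r p unfolding F_def c_def by simp
  qed
qed


theorem theorem2:
  fixes f g \<alpha> :: "complex \<Rightarrow> complex" and D :: "complex set"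
  assumes "open D" and "connected D"
    and "f meromorphic_on D" and "g meromorphic_on D" and "\<alpha> meromorphic_on D"
    and "\<exists>z\<in>D. \<exists>\<^sub>F w in at z. \<alpha> w \<noteq> 0"
    and "\<not> (\<forall>z\<in>D. is_pole \<alpha> z)"
    and "share_CM_value f g \<alpha> D"
  shows "\<forall>z\<in>D. \<forall>m::nat. m \<ge> 1 \<longrightarrow>
           (zero_of_order (\<lambda>w. f w / \<alpha> w - 1) z m \<longleftrightarrow> zero_of_order (\<lambda>w. g w / \<alpha> w - 1) z m)"
proof (intro ballI allI impI)
  fix z and m :: nat
  assume zD: "z \<in> D" and m1: "m \<ge> 1"
  have anz: "\<forall>z\<in>D. \<forall>\<^sub>F w in at z. \<alpha> w \<noteq> 0"
  proof -
    have "eventually (\<lambda>w. \<alpha> w = 0) (cosparse D) \<or> eventually (\<lambda>w. \<alpha> w \<noteq> 0) (cosparse D)"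
      by (rule meromorphic_imp_constant_or_avoid[OF assms(5,1,2)])
    moreover have "\<not> eventually (\<lambda>w. \<alpha> w = 0) (cosparse D)"
      using assms(6) assms(1) by (auto simp: eventually_cosparse_open_eq frequently_def)
    ultimately show ?thesis using assms(1) by (simp add: eventually_cosparse_open_eq)
  qed
  have an: "\<forall>\<^sub>F w in at z. \<alpha> w \<noteq> 0" using anz zD by blast
  have fm: "f meromorphic_on {z}" using assms(3) zD meromorphic_on_subset by blast
  have gm: "g meromorphic_on {z}" using assms(4) zD meromorphic_on_subset by blast
  have am: "\<alpha> meromorphic_on {z}" using assms(5) zD meromorphic_on_subset by blast
  have sh: "\<And>k::nat. k \<ge> 1 \<Longrightarrow> (\<not> is_pole \<alpha> z \<longrightarrow>
           (zero_of_order (\<lambda>w. f w - \<alpha> w) z k \<longleftrightarrow> zero_of_order (\<lambda>w. g w - \<alpha> w) z k)) \<and>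
        (is_pole \<alpha> z \<longrightarrow>
           (recip_diff_zero_of_order f \<alpha> z k \<longleftrightarrow> recip_diff_zero_of_order g \<alpha> z k))"
    using assms(8) zD unfolding share_CM_value_def by blast
  show "zero_of_order (\<lambda>w. f w / \<alpha> w - 1) z m \<longleftrightarrow> zero_of_order (\<lambda>w. g w / \<alpha> w - 1) z m"
  proof (cases "is_pole \<alpha> z")
    case True
    have c: "zorder \<alpha> z < 0"
      using isolated_pole_imp_neg_zorder True am meromorphic_at_iff by blast
    have k1: "nat (int m - zorder \<alpha> z) \<ge> 1" using c m1 by linarith
    show ?thesis
      unfolding key_pole[OF fm am an True m1] key_pole[OF gm am an True m1]
      using sh[OF k1] True by blast
  next
    case False
    have c: "zorder \<alpha> z \<ge> 0"
      using zorder_neg_imp_is_pole[OF am an] False by linarith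
    have k1: "nat (int m + zorder \<alpha> z) \<ge> 1" using c m1 by linarith
    show ?thesis
      unfolding key_nonpole[OF fm am an False] key_nonpole[OF gm am an False]
      using sh[OF k1] False by blast
  qed
qed

end
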